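(* For $n\ge 1$ let $f_n$ denote the number of noncrossing linked partitions of $[n]=\{1,\dots,n\}$. Then $f_1=1$ and for every $n\ge 1$, $$f_{n+1}=f_n+f_1f_n+f_2f_{n-1}+\cdots+f_nf_1 .$$
   Context: Two finite sets of integers $E,F$ are nearly disjoint if for every $i\in E\cap F$ one of the following holds: (a) $i=\min(E)$, $|E|>1$ and $i\neq\min(F)$; or (b) $i=\min(F)$, $|F|>1$ and $i\neq \min(E)$. A linked partition of $[n]$ is a set $\pi$ of nonempty subsets of $[n]$ (called blocks) whose union is $[n]$ and such that any two distinct blocks are nearly disjoint. Two blocks $B,B'$ are crossing if there are $a,c\in B$ and $b,d\in B'$ with $a<b<c<d$. A linked partition is noncrossing if no two distinct blocks are crossing. *)

theory Defs
  imports Main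
begin

definition nearly_disjoint :: "int set \<Rightarrow> int set \<Rightarrow> bool" where
  "nearly_disjoint E F \<longleftrightarrow>
     (\<forall>i\<in>E \<inter> F.
        (i = Min E \<and> card E > 1 \<and> i \<noteq> Min F) \<or>
        (i = Min F \<and> card F > 1 \<and> i \<noteq> Min E))"

definition linked_partition :: "nat \<Rightarrow> int set set \<Rightarrow> bool" where
  "linked_partition n \<pi> \<longleftrightarrow>
     (\<forall>B\<in>\<pi>. B \<noteq> {} \<and> B \<subseteq> {1..int n}) \<and>
     \<Union>\<pi> = {1..int n} \<and>
     (\<forall>B\<in>\<pi>. \<forall>B'\<in>\<pi>. B \<noteq> B' \<longrightarrow> nearly_disjoint B B')"

definition crossing :: "int set \<Rightarrow> int set \<Rightarrow> bool" where
  "crossing B B' \<longleftrightarrow>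
     (\<exists>a\<in>B. \<exists>c\<in>B. \<exists>b\<in>B'. \<exists>d\<in>B'. a < b \<and> b < c \<and> c < d)"

definition noncrossing_linked_partition :: "nat \<Rightarrow> int set set \<Rightarrow> bool" where
  "noncrossing_linked_partition n \<pi> \<longleftrightarrow>
     linked_partition n \<pi> \<and>
     (\<forall>B\<in>\<pi>. \<forall>B'\<in>\<pi>. B \<noteq> B' \<longrightarrow> \<not> crossing B B')"

definition ncl_count :: "nat \<Rightarrow> nat" where
  "ncl_count n = card {\<pi>. noncrossing_linked_partition n \<pi>}"

end

theory Submission
  imports Defs
begin
definition ncp :: "int \<Rightarrow> int \<Rightarrow> int set set \<Rightarrow> bool" where
  "ncp lo hi P \<longleftrightarrow> (\<forall>B\<in>P. B \<noteq> {} \<and> B \<subseteq> {lo..hi}) \<and> \<Union>P = {lo..hi} \<and>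
     (\<forall>B\<in>P. \<forall>B'\<in>P. B \<noteq> B' \<longrightarrow> nearly_disjoint B B' \<and> \<not> crossing B B')"

lemma ncl_ncp: "noncrossing_linked_partition n P = ncp 1 (int n) P"
  unfolding noncrossing_linked_partition_def linked_partition_def ncp_def
  by (simp add: imp_conjR ball_conj_distrib conj_assoc)

lemma ncl_count_ncp: "ncl_count n = card {P. ncp 1 (int n) P}"
  unfolding ncl_count_def ncl_ncp ..

lemma nd_sym: "nearly_disjoint E F \<longleftrightarrow> nearly_disjoint F E"
  unfolding nearly_disjoint_def by blast

lemma nd_singleton: "nearly_disjoint {x} D \<Longrightarrow> x \<notin> D"
  unfolding nearly_disjoint_def by auto

lemma nd_same_min: "nearly_disjoint B D \<Longrightarrow> x \<in> B \<Longrightarrow> x \<in> D \<Longrightarrow> x = Min B \<Longrightarrow> x = Min D \<Longrightarrow> False"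
  unfolding nearly_disjoint_def by auto

lemma nd_mod: assumes "nearly_disjoint A D" "A' \<inter> D \<subseteq> A \<inter> D" "Min A' = Min A" "Min A \<notin> D"
   shows "nearly_disjoint A' D"
  unfolding nearly_disjoint_def
proof
  fix i assume i: "i \<in> A' \<inter> D"
  then have "i \<in> A \<inter> D" using assms(2) by blast
  then have "(i = Min A \<and> card A > 1 \<and> i \<noteq> Min D) \<or> (i = Min D \<and> card D > 1 \<and> i \<noteq> Min A)"
    using assms(1) unfolding nearly_disjoint_def by blast
  then show "(i = Min A' \<and> card A' > 1 \<and> i \<noteq> Min D) \<or> (i = Min D \<and> card D > 1 \<and> i \<noteq> Min A')"
    using i assms(3,4) by auto
qed

lemma crossing_mono: assumes "crossing B B'" "B \<subseteq> C" "B' \<subseteq> C'" shows "crossing C C'"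
proof -
  obtain a c b d where "a \<in> B" "c \<in> B" "b \<in> B'" "d \<in> B'" "a < b" "b < c" "c < d"
    using assms(1) unfolding crossing_def by blast
  then show ?thesis unfolding crossing_def using assms(2,3) by blast
qed

lemma no_cross_sep1: assumes "\<forall>x\<in>D. x \<le> b" "\<forall>y\<in>E. b \<le> y" shows "\<not> crossing D E"
proof
  assume "crossing D E"
  then obtain a c b' d where "a \<in> D" "c \<in> D" "b' \<in> E" "d \<in> E" "a < b'" "b' < c" "c < d"
    unfolding crossing_def by blast
  moreover have "c \<le> b" using assms(1) \<open>c \<in> D\<close> by blast
  moreover have "b \<le> b'" using assms(2) \<open>b' \<in> E\<close> by blast
  ultimately show False by linarith
qed

lemma no_cross_sep2: assumes "\<forall>x\<in>D. x \<le> b" "\<forall>y\<in>E. b \<le> y" shows "\<not> crossing E D"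
proof
  assume "crossing E D"
  then obtain a c b' d where "a \<in> E" "c \<in> E" "b' \<in> D" "d \<in> D" "a < b'" "b' < c" "c < d"
    unfolding crossing_def by blast
  moreover have "d \<le> b" using assms(1) \<open>d \<in> D\<close> by blast
  moreover have "b \<le> a" using assms(2) \<open>a \<in> E\<close> by blast
  ultimately show False by linarith
qed

lemma no_cross_single: "\<not> crossing {x} D \<and> \<not> crossing D {x}"
  unfolding crossing_def by auto

lemma Min_eq_lo: "finite B \<Longrightarrow> B \<subseteq> {lo..hi} \<Longrightarrow> lo \<in> B \<Longrightarrow> Min B = lo"
  by (meson Min_eqI atLeastAtMost_iff subsetD)

lemma ncp_block_finite: "ncp lo hi P \<Longrightarrow> B \<in> P \<Longrightarrow> finite B"
  unfolding ncp_def by (meson finite_atLeastAtMost_int finite_subset)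

lemma ncp_finite: "finite {P. ncp lo hi P}"
proof -
  have "{P. ncp lo hi P} \<subseteq> Pow (Pow {lo..hi})" unfolding ncp_def by auto
  then show ?thesis by (rule finite_subset) auto
qed

lemma ncp_lo_unique: "ncp lo hi P \<Longrightarrow> B \<in> P \<Longrightarrow> D \<in> P \<Longrightarrow> lo \<in> B \<Longrightarrow> lo \<in> D \<Longrightarrow> B = D"
proof (rule ccontr)
  assume a: "ncp lo hi P" "B \<in> P" "D \<in> P" "lo \<in> B" "lo \<in> D" "B \<noteq> D"
  then have "nearly_disjoint B D" unfolding ncp_def by blast
  moreover have "Min B = lo" "Min D = lo" using a ncp_block_finite[OF a(1)] Min_eq_lo unfolding ncp_def by metis+
  ultimately show False using nd_same_min a by metis
qed

lemma ncp_lo_exists: "ncp lo hi P \<Longrightarrow> lo \<le> hi \<Longrightarrow> \<exists>B\<in>P. lo \<in> B"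
  unfolding ncp_def by (metis UnionE atLeastAtMost_iff order_refl)

lemma nd_shift: assumes "nearly_disjoint E F" "finite E" "finite F" "E \<noteq> {}" "F \<noteq> {}"
  shows "nearly_disjoint ((+) c ` E) ((+) c ` F)"
proof -
  have mE: "Min ((+) c ` E) = c + Min E" using assms mono_Min_commute[of "(+) c" E]
    by (simp add: mono_def)
  have mF: "Min ((+) c ` F) = c + Min F" using assms mono_Min_commute[of "(+) c" F]
    by (simp add: mono_def)
  have cE: "card ((+) c ` E) = card E" by (simp add: card_image)
  have cF: "card ((+) c ` F) = card F" by (simp add: card_image)
  show ?thesis unfolding nearly_disjoint_def mE mF cE cF
  proof
    fix i assume "i \<in> (+) c ` E \<inter> (+) c ` F"
    then obtain j where j: "i = c + j" "j \<in> E \<inter> F" by auto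
    then show "i = c + Min E \<and> 1 < card E \<and> i \<noteq> c + Min F \<or> i = c + Min F \<and> 1 < card F \<and> i \<noteq> c + Min E"
      using assms(1) unfolding nearly_disjoint_def by auto
  qed
qed

lemma cross_shift: "crossing ((+) c ` B) ((+) c ` B') \<Longrightarrow> crossing B B'"
  unfolding crossing_def by auto

lemma ncp_shift: assumes "ncp lo hi P" shows "ncp (lo+c) (hi+c) ((`) ((+) c) ` P)"
proof -
  have fin: "\<And>B. B \<in> P \<Longrightarrow> finite B" using ncp_block_finite[OF assms] .
  have 1: "\<forall>B\<in>(`) ((+) c) ` P. B \<noteq> {} \<and> B \<subseteq> {lo+c..hi+c}" using assms unfolding ncp_def by fastforce
  have "\<Union>((`) ((+) c) ` P) = (+) c ` \<Union>P" by auto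
  also have "\<dots> = (+) c ` {lo..hi}" using assms unfolding ncp_def by simp
  also have "\<dots> = {lo+c..hi+c}"
  proof (intro set_eqI iffI)
    fix x assume "x \<in> {lo + c..hi + c}" then show "x \<in> (+) c ` {lo..hi}"
      by (intro image_eqI[of _ _ "x - c"]) auto
  qed auto
  finally have 2: "\<Union>((`) ((+) c) ` P) = {lo+c..hi+c}" .
  have 3: "\<forall>B\<in>(`) ((+) c) ` P. \<forall>B'\<in>(`) ((+) c) ` P. B \<noteq> B' \<longrightarrow> nearly_disjoint B B' \<and> \<not> crossing B B'"
  proof (intro ballI impI)
    fix B B' assume "B \<in> (`) ((+) c) ` P" "B' \<in> (`) ((+) c) ` P" "B \<noteq> B'"
    then obtain X Y where "X \<in> P" "Y \<in> P" "B = (+) c ` X" "B' = (+) c ` Y" "X \<noteq> Y" by auto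
    then show "nearly_disjoint B B' \<and> \<not> crossing B B'"
      using assms fin nd_shift cross_shift unfolding ncp_def by metis
  qed
  show ?thesis using 1 2 3 unfolding ncp_def by blast
qed

lemma ncp_count_shift: "card {P. ncp lo hi P} = card {P. ncp (lo+c) (hi+c) P}"
proof (rule bij_betw_same_card[of "(`) ((`) ((+) c))"], rule bij_betw_byWitness[where f'="(`) ((`) ((+) (-c)))"])
  show "\<forall>a\<in>{P. ncp lo hi P}. (`) ((+) (-c)) ` (`) ((+) c) ` a = a" by (simp add: image_image)
  show "\<forall>a'\<in>{P. ncp (lo + c) (hi + c) P}. (`) ((+) c) ` (`) ((+) (-c)) ` a' = a'" by (simp add: image_image)
  show "(`) ((`) ((+) c)) ` {P. ncp lo hi P} \<subseteq> {P. ncp (lo + c) (hi + c) P}" using ncp_shift by blast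
  show "(`) ((`) ((+) (-c))) ` {P. ncp (lo + c) (hi + c) P} \<subseteq> {P. ncp lo hi P}"
    using ncp_shift[of "lo+c" "hi+c" _ "-c"] by auto
qed

lemma ncp_count: "lo \<le> hi + 1 \<Longrightarrow> card {P. ncp lo hi P} = ncl_count (nat (hi - lo + 1))"
proof -
  assume h: "lo \<le> hi + 1"
  have "card {P. ncp lo hi P} = card {P. ncp (lo + (1-lo)) (hi + (1-lo)) P}" by (rule ncp_count_shift)
  also have "hi + (1 - lo) = int (nat (hi - lo + 1))" using h by simp
  finally show ?thesis by (simp add: ncl_count_ncp)
qed

lemma nd_disjoint: "E \<inter> F = {} \<Longrightarrow> nearly_disjoint E F"
  unfolding nearly_disjoint_def by blast

lemma ncp_pair: "ncp lo hi P \<Longrightarrow> B \<in> P \<Longrightarrow> D \<in> P \<Longrightarrow> B \<noteq> D \<Longrightarrow> nearly_disjoint B D \<and> \<not> crossing B D"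
  unfolding ncp_def by blast

lemma ncp_sub: "ncp lo hi P \<Longrightarrow> B \<in> P \<Longrightarrow> B \<subseteq> {lo..hi}"
  unfolding ncp_def by blast

lemma ncp_ne: "ncp lo hi P \<Longrightarrow> B \<in> P \<Longrightarrow> B \<noteq> {}"
  unfolding ncp_def by blast

lemma ncp_Un: "ncp lo hi P \<Longrightarrow> \<Union>P = {lo..hi}"
  unfolding ncp_def by blast

lemma ncp_intro:
  assumes "\<And>B. B \<in> P \<Longrightarrow> B \<noteq> {}" "\<And>B. B \<in> P \<Longrightarrow> B \<subseteq> {lo..hi}" "\<Union>P = {lo..hi}"
    "\<And>B D. B \<in> P \<Longrightarrow> D \<in> P \<Longrightarrow> B \<noteq> D \<Longrightarrow> nearly_disjoint B D"
    "\<And>B D. B \<in> P \<Longrightarrow> D \<in> P \<Longrightarrow> B \<noteq> D \<Longrightarrow> \<not> crossing B D"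
  shows "ncp lo hi P"
  unfolding ncp_def using assms by blast

lemma blk1: assumes "ncp 1 N P" "B \<in> P" "1 \<in> B" "Max B = 1" shows "B = {1}"
proof -
  have f: "finite B" using ncp_block_finite assms by blast
  have "\<forall>x\<in>B. x \<le> 1" using Max_ge[OF f] assms(4) by metis
  moreover have "B \<subseteq> {1..N}" using ncp_sub assms by blast
  ultimately show ?thesis using assms(3) by fastforce
qed

lemma T1: assumes "1 \<le> N"
  shows "card {P. ncp 1 N P \<and> (\<exists>B\<in>P. 1 \<in> B \<and> Max B = 1)} = card {P. ncp 2 N P}"
proof (rule bij_betw_same_card[of "\<lambda>P. P - {{1}}"], rule bij_betw_byWitness[where f'="insert {1}"])
  show "\<forall>a\<in>{P. ncp 1 N P \<and> (\<exists>B\<in>P. 1 \<in> B \<and> Max B = 1)}. insert {1} (a - {{1}}) = a"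
    using blk1 by blast
  show "\<forall>a'\<in>{P. ncp 2 N P}. insert {1} a' - {{1}} = a'"
    using ncp_sub by fastforce
  show "(\<lambda>P. P - {{1}}) ` {P. ncp 1 N P \<and> (\<exists>B\<in>P. 1 \<in> B \<and> Max B = 1)} \<subseteq> {P. ncp 2 N P}"
  proof clarify
    fix P B assume P: "ncp 1 N P" "B \<in> P" "1 \<in> B" "Max B = 1"
    then have B1: "B = {1}" using blk1 by blast
    have nd1: "1 \<notin> D" if "D \<in> P - {{1}}" for D
      using ncp_lo_unique[OF P(1) P(2) _ P(3)] that B1 by blast
    have sub: "D \<subseteq> {2..N}" if "D \<in> P - {{1}}" for D
    proof
      fix x assume "x \<in> D"
      then have "x \<in> {1..N}" "x \<noteq> 1" using ncp_sub[OF P(1), of D] nd1[OF that] that by auto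
      then show "x \<in> {2..N}" by auto
    qed
    show "ncp 2 N (P - {{1}})"
    proof (rule ncp_intro)
      show "\<Union>(P - {{1}}) = {2..N}"
      proof
        show "\<Union>(P - {{1}}) \<subseteq> {2..N}" using sub by blast
        show "{2..N} \<subseteq> \<Union>(P - {{1}})"
        proof
          fix z assume z: "z \<in> {2..N}"
          then have "z \<in> \<Union>P" using ncp_Un[OF P(1)] by auto
          then obtain D where "D \<in> P" "z \<in> D" by blast
          then show "z \<in> \<Union>(P - {{1}})" using z by auto
        qed
      qed
    qed (use P ncp_ne ncp_pair sub in blast)+
  qed
  show "insert {1} ` {P. ncp 2 N P} \<subseteq> {P. ncp 1 N P \<and> (\<exists>B\<in>P. 1 \<in> B \<and> Max B = 1)}"
  proof clarify
    fix P assume P: "ncp 2 N P"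
    have "ncp 1 N (insert {1} P)"
    proof (rule ncp_intro)
      show "\<Union>(insert {1} P) = {1..N}" using ncp_Un[OF P] assms by auto
      show "B \<subseteq> {1..N}" if "B \<in> insert {1} P" for B using that ncp_sub[OF P] assms by fastforce
      show "nearly_disjoint B D" if "B \<in> insert {1} P" "D \<in> insert {1} P" "B \<noteq> D" for B D
      proof -
        have "{1} \<inter> E = {}" if "E \<in> P" for E using ncp_sub[OF P that] by auto
        then show ?thesis using that ncp_pair[OF P] nd_disjoint by (metis inf_commute insertE)
      qed
      show "\<not> crossing B D" if "B \<in> insert {1} P" "D \<in> insert {1} P" "B \<noteq> D" for B D
        using that ncp_pair[OF P] no_cross_single by blast
    qed (use ncp_ne[OF P] in auto)
    then show "ncp 1 N (insert {1} P) \<and> (\<exists>B\<in>insert {1} P. 1 \<in> B \<and> Max B = 1)" by auto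
  qed
qed

lemma max_blk: assumes "ncp 1 N P" "B1 \<in> P" "1 \<in> B1" "Max B1 = b"
  shows "b \<in> B1" "B1 \<subseteq> {1..b}"
proof -
  have f: "finite B1" using ncp_block_finite assms by blast
  show "b \<in> B1" using Max_in[OF f] assms by blast
  have "\<forall>x\<in>B1. x \<le> b" using Max_ge[OF f] assms(4) by metis
  then show "B1 \<subseteq> {1..b}" using ncp_sub[OF assms(1,2)] by fastforce
qed

lemma split_sep: assumes P: "ncp 1 N P" "B1 \<in> P" "1 \<in> B1" "Max B1 = b" and D: "D \<in> P"
  shows "D \<subseteq> {1..b} \<or> D \<subseteq> {b..N}"
proof (rule ccontr)
  assume c: "\<not> (D \<subseteq> {1..b} \<or> D \<subseteq> {b..N})"
  then obtain x y where xy: "x \<in> D" "x \<notin> {1..b}" "y \<in> D" "y \<notin> {b..N}" by blast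
  have DN: "D \<subseteq> {1..N}" using ncp_sub[OF P(1) D] .
  have bB: "b \<in> B1" "B1 \<subseteq> {1..b}" using max_blk[OF P] by auto
  have "D \<noteq> B1" using c bB by blast
  then have "1 \<notin> D" using ncp_lo_unique[OF P(1) P(2) D P(3)] by blast
  moreover have "y \<in> {1..N}" "x \<in> {1..N}" using DN xy by auto
  ultimately have ineq: "1 < y" "y < b" "b < x" using xy by (auto simp: not_le) (metis order.order_iff_strict)
  have "crossing B1 D" unfolding crossing_def
    using ineq xy(1,3) bB(1) P(3) by blast
  then show False using ncp_pair[OF P(1) P(2) D] \<open>D \<noteq> B1\<close> by blast
qed

lemma nosing_b: assumes "ncp lo N P" "B1 \<in> P" "b \<in> B1" "B1 \<noteq> {b}" shows "{b} \<notin> P"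
  using assms ncp_pair nd_singleton by blast

definition lpart :: "int \<Rightarrow> int set set \<Rightarrow> int set set" where
  "lpart b P = {D\<in>P. D \<subseteq> {1..b}}"

definition rpart :: "int \<Rightarrow> int \<Rightarrow> int set set \<Rightarrow> int set set" where
  "rpart b N P = (if b \<in> \<Union>{D\<in>P. D \<subseteq> {b..N}} then {D\<in>P. D \<subseteq> {b..N}} else insert {b} {D\<in>P. D \<subseteq> {b..N}})"

definition glue :: "int \<Rightarrow> int set set \<times> int set set \<Rightarrow> int set set" where
  "glue b LR = fst LR \<union> (snd LR - {{b}})"

lemma lpart_ok: assumes P: "ncp 1 N P" "B1 \<in> P" "1 \<in> B1" "Max B1 = b"
  shows "ncp 1 b (lpart b P) \<and> (\<exists>B\<in>lpart b P. 1 \<in> B \<and> b \<in> B)"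
proof -
  have bB: "b \<in> B1" "B1 \<subseteq> {1..b}" using max_blk[OF P] by auto
  have "ncp 1 b (lpart b P)"
  proof (rule ncp_intro)
    show "\<Union>(lpart b P) = {1..b}"
    proof
      show "\<Union>(lpart b P) \<subseteq> {1..b}" unfolding lpart_def by blast
      show "{1..b} \<subseteq> \<Union>(lpart b P)"
      proof
        fix z assume z: "z \<in> {1..b}"
        have "b \<le> N" using bB ncp_sub[OF P(1,2)] by auto
        then have "z \<in> \<Union>P" using z ncp_Un[OF P(1)] by auto
        then obtain D where D: "D \<in> P" "z \<in> D" by blast
        show "z \<in> \<Union>(lpart b P)"
        proof (cases "D \<subseteq> {1..b}")
          case True then show ?thesis using D unfolding lpart_def by blast
        next
          case False
          then have "D \<subseteq> {b..N}" using split_sep[OF P D(1)] by blast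
          then have "z = b" using z D by fastforce
          then show ?thesis using bB P(2) unfolding lpart_def by blast
        qed
      qed
    qed
  qed (use P ncp_ne ncp_pair in \<open>auto simp: lpart_def\<close>)
  then show ?thesis using bB P unfolding lpart_def by blast
qed

lemma rpart_ok: assumes P: "ncp 1 N P" "B1 \<in> P" "1 \<in> B1" "Max B1 = b" and b: "b \<le> N"
  shows "ncp b N (rpart b N P)"
proof -
  let ?R = "{D\<in>P. D \<subseteq> {b..N}}"
  have bB: "b \<in> B1" "B1 \<subseteq> {1..b}" using max_blk[OF P] by auto
  have U: "\<Union>?R \<union> {b} = {b..N}"
  proof
    show "\<Union>?R \<union> {b} \<subseteq> {b..N}" using b by auto
    show "{b..N} \<subseteq> \<Union>?R \<union> {b}"
    proof
      fix z assume z: "z \<in> {b..N}"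
      show "z \<in> \<Union>?R \<union> {b}"
      proof (cases "z = b")
        case False
        have "1 \<le> b" using bB by auto
        then have "z \<in> \<Union>P" using z ncp_Un[OF P(1)] by auto
        then obtain D where D: "D \<in> P" "z \<in> D" by blast
        have "\<not> D \<subseteq> {1..b}" using D z False by fastforce
        then have "D \<subseteq> {b..N}" using split_sep[OF P D(1)] by blast
        then show ?thesis using D by blast
      qed simp
    qed
  qed
  have base: "ncp b N ?R" if "b \<in> \<Union>?R"
  proof (rule ncp_intro)
    show "\<Union>?R = {b..N}" using U that by blast
  qed (use P ncp_ne ncp_pair in auto)
  have ext: "ncp b N (insert {b} ?R)" if "b \<notin> \<Union>?R"
  proof (rule ncp_intro)
    show "\<Union>(insert {b} ?R) = {b..N}" using U by auto
    show "B \<subseteq> {b..N}" if "B \<in> insert {b} ?R" for B using that b by auto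
    show "nearly_disjoint B D" if "B \<in> insert {b} ?R" "D \<in> insert {b} ?R" "B \<noteq> D" for B D
    proof -
      have "{b} \<inter> E = {}" if "E \<in> ?R" for E using that \<open>b \<notin> \<Union>?R\<close> by blast
      then show ?thesis using that ncp_pair[OF P(1)] nd_disjoint by (metis (no_types, lifting) inf_commute insertE mem_Collect_eq)
    qed
    show "\<not> crossing B D" if "B \<in> insert {b} ?R" "D \<in> insert {b} ?R" "B \<noteq> D" for B D
      using that ncp_pair[OF P(1)] no_cross_single by blast
  qed (use P ncp_ne in auto)
  show ?thesis unfolding rpart_def using base ext by auto
qed

lemma L_b_unique: assumes L: "ncp 1 b P" "B1 \<in> P" "1 \<in> B1" "b \<in> B1" "2 \<le> b" and D: "D \<in> P" "b \<in> D"
  shows "D = B1"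
proof (rule ccontr)
  assume ne: "D \<noteq> B1"
  have fB: "finite B1" "finite D" using ncp_block_finite L D by blast+
  have m1: "Min B1 = 1" using Min_eq_lo[OF fB(1) ncp_sub[OF L(1,2)] L(3)] .
  have nd: "nearly_disjoint B1 D" using ncp_pair[OF L(1,2) D(1)] ne by blast
  have Ds: "D \<subseteq> {1..b}" using ncp_sub[OF L(1) D(1)] .
  have "b \<in> B1 \<inter> D" using D(2) L(4) by blast
  then have "(b = Min B1 \<and> card B1 > 1 \<and> b \<noteq> Min D) \<or> (b = Min D \<and> card D > 1 \<and> b \<noteq> Min B1)"
    using nd unfolding nearly_disjoint_def by blast
  then have "b = Min D \<and> card D > 1" using m1 L(5) by auto
  moreover have "D \<subseteq> {b}" if "b = Min D"
  proof
    fix x assume "x \<in> D"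
    then have "Min D \<le> x" "x \<le> b" using Min_le[OF fB(2)] Ds by auto
    then show "x \<in> {b}" using that by auto
  qed
  ultimately have "card D \<le> 1" using card_mono[of "{b}" D] by auto
  then show False using \<open>b = Min D \<and> card D > 1\<close> by auto
qed

lemma R_b: assumes R: "ncp b N Q" "E \<in> Q" "E \<noteq> {b}" "b \<in> E"
  shows "Min E = b" "card E > 1"
proof -
  have f: "finite E" using ncp_block_finite R by blast
  show "Min E = b" using Min_eq_lo[OF f ncp_sub[OF R(1,2)] R(4)] .
  have "{b} \<subset> E" using R(3,4) by blast
  then have "card {b} < card E" using psubset_card_mono[OF f] by blast
  then show "card E > 1" by simp
qed

lemma glue_ok: assumes L: "ncp 1 b P" "B1 \<in> P" "1 \<in> B1" "b \<in> B1" "2 \<le> b" and R: "ncp b N Q" and bN: "b \<le> N"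
  shows "ncp 1 N (glue b (P, Q)) \<and> (\<exists>B\<in>glue b (P, Q). 1 \<in> B \<and> Max B = b)"
proof -
  have mixnd: "nearly_disjoint D E \<and> nearly_disjoint E D \<and> \<not> crossing D E \<and> \<not> crossing E D"
    if D: "D \<in> P" and E: "E \<in> Q - {{b}}" for D E
  proof -
    have Ds: "D \<subseteq> {1..b}" using ncp_sub[OF L(1) D] .
    have Es: "E \<subseteq> {b..N}" using ncp_sub[OF R] E by blast
    have int: "D \<inter> E \<subseteq> {b}"
    proof
      fix x assume "x \<in> D \<inter> E"
      then have "x \<le> b" "b \<le> x" using Ds Es by auto
      then show "x \<in> {b}" by simp
    qed
    have nd: "nearly_disjoint D E"
    proof (cases "b \<in> D \<inter> E")
      case True
      then have "D = B1" using L_b_unique[OF L D] by blast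
      then have "Min D = 1" using Min_eq_lo[OF ncp_block_finite[OF L(1,2)] ncp_sub[OF L(1,2)] L(3)] by simp
      moreover have "Min E = b" "card E > 1" using R_b[OF R, of E] E True by auto
      ultimately show ?thesis using int L(5) unfolding nearly_disjoint_def by auto
    next
      case False
      then have "D \<inter> E = {}" using int by blast
      then show ?thesis by (rule nd_disjoint)
    qed
    moreover have "\<forall>x\<in>D. x \<le> b" "\<forall>y\<in>E. b \<le> y" using Ds Es by auto
    ultimately show ?thesis using nd_sym no_cross_sep1 no_cross_sep2 by blast
  qed
  have "ncp 1 N (glue b (P, Q))" unfolding glue_def fst_conv snd_conv
  proof (rule ncp_intro)
    show "B \<noteq> {}" if "B \<in> P \<union> (Q - {{b}})" for B using that ncp_ne L(1) R by blast
    show "B \<subseteq> {1..N}" if "B \<in> P \<union> (Q - {{b}})" for B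
      using that ncp_sub[OF L(1)] ncp_sub[OF R] bN L(5) by fastforce
    show "\<Union>(P \<union> (Q - {{b}})) = {1..N}"
    proof
      show "\<Union>(P \<union> (Q - {{b}})) \<subseteq> {1..N}" using ncp_sub[OF L(1)] ncp_sub[OF R] bN L(5) by fastforce
      show "{1..N} \<subseteq> \<Union>(P \<union> (Q - {{b}}))"
      proof
        fix z assume z: "z \<in> {1..N}"
        show "z \<in> \<Union>(P \<union> (Q - {{b}}))"
        proof (cases "z \<le> b")
          case True
          then show ?thesis using z ncp_Un[OF L(1)] by auto
        next
          case False
          then have "z \<in> \<Union>Q" using z ncp_Un[OF R] by auto
          then obtain E where "E \<in> Q" "z \<in> E" by blast
          then show ?thesis using False by auto
        qed
      qed
    qed
    show "nearly_disjoint B D" if "B \<in> P \<union> (Q - {{b}})" "D \<in> P \<union> (Q - {{b}})" "B \<noteq> D" for B D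
      using that mixnd[of B D] mixnd[of D B] ncp_pair[OF L(1), of B D] ncp_pair[OF R, of B D] by auto
    show "\<not> crossing B D" if "B \<in> P \<union> (Q - {{b}})" "D \<in> P \<union> (Q - {{b}})" "B \<noteq> D" for B D
      using that mixnd[of B D] mixnd[of D B] ncp_pair[OF L(1), of B D] ncp_pair[OF R, of B D] by auto
  qed
  moreover have "Max B1 = b"
  proof (rule Max_eqI)
    show "finite B1" using ncp_block_finite L by blast
    show "y \<le> b" if "y \<in> B1" for y using that ncp_sub[OF L(1,2)] by auto
  qed (use L in auto)
  ultimately show ?thesis using L(2,3) unfolding glue_def by auto
qed

lemma rt1: assumes P: "ncp 1 N P" "B1 \<in> P" "1 \<in> B1" "Max B1 = b" "2 \<le> b"
  shows "glue b (lpart b P, rpart b N P) = P"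
proof -
  have bB: "b \<in> B1" using max_blk[OF P(1-4)] by auto
  have "B1 \<noteq> {b}" using P(3,5) by auto
  then have nb: "{b} \<notin> P" using nosing_b[OF P(1,2) bB] by blast
  have "rpart b N P - {{b}} = {D\<in>P. D \<subseteq> {b..N}}" unfolding rpart_def using nb by auto
  then have "glue b (lpart b P, rpart b N P) = {D\<in>P. D \<subseteq> {1..b}} \<union> {D\<in>P. D \<subseteq> {b..N}}"
    unfolding glue_def lpart_def by simp
  also have "\<dots> = P" using split_sep[OF P(1-4)] by blast
  finally show ?thesis .
qed

lemma rt2: assumes L: "ncp 1 b P" "B1 \<in> P" "1 \<in> B1" "b \<in> B1" "2 \<le> b" and R: "ncp b N Q" and bN: "b \<le> N"
  shows "lpart b (glue b (P, Q)) = P \<and> rpart b N (glue b (P, Q)) = Q"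
proof -
  have sb: "D = {b}" if "D \<subseteq> {1..b}" "D \<subseteq> {b..N}" "D \<noteq> {}" for D
  proof -
    have "D \<subseteq> {b}"
    proof
      fix x assume "x \<in> D"
      then have "x \<le> b" "b \<le> x" using that(1,2) by auto
      then show "x \<in> {b}" by simp
    qed
    then show ?thesis using that(3) by blast
  qed
  have "B1 \<noteq> {b}" using L(3,5) by auto
  then have nbP: "{b} \<notin> P" using nosing_b[OF L(1,2,4)] by blast
  have l: "lpart b (glue b (P, Q)) = P"
    unfolding lpart_def glue_def fst_conv snd_conv
  proof (intro set_eqI iffI)
    fix D assume "D \<in> {D \<in> P \<union> (Q - {{b}}). D \<subseteq> {1..b}}"
    then show "D \<in> P" using sb[of D] ncp_sub[OF R, of D] ncp_ne[OF R, of D] by auto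
  next
    fix D assume "D \<in> P" then show "D \<in> {D \<in> P \<union> (Q - {{b}}). D \<subseteq> {1..b}}"
      using ncp_sub[OF L(1)] by auto
  qed
  have r0: "{D \<in> glue b (P, Q). D \<subseteq> {b..N}} = Q - {{b}}"
    unfolding glue_def fst_conv snd_conv
  proof (intro set_eqI iffI)
    fix D assume "D \<in> {D \<in> P \<union> (Q - {{b}}). D \<subseteq> {b..N}}"
    then show "D \<in> Q - {{b}}" using sb[of D] ncp_sub[OF L(1), of D] ncp_ne[OF L(1), of D] nbP by auto
  next
    fix D assume "D \<in> Q - {{b}}" then show "D \<in> {D \<in> P \<union> (Q - {{b}}). D \<subseteq> {b..N}}"
      using ncp_sub[OF R] by auto
  qed
  have r: "rpart b N (glue b (P, Q)) = Q"
  proof (cases "{b} \<in> Q")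
    case True
    then have "b \<notin> \<Union>(Q - {{b}})" using ncp_pair[OF R] nd_singleton by blast
    then show ?thesis unfolding rpart_def r0 using True by auto
  next
    case False
    then have "b \<in> \<Union>(Q - {{b}})" using ncp_Un[OF R] bN by auto
    then show ?thesis unfolding rpart_def r0 using False by auto
  qed
  show ?thesis using l r by blast
qed

lemma Tb: assumes b2: "2 \<le> b" and bN: "b \<le> N"
  shows "card {P. ncp 1 N P \<and> (\<exists>B\<in>P. 1 \<in> B \<and> Max B = b)}
       = card {P. ncp 1 b P \<and> (\<exists>B\<in>P. 1 \<in> B \<and> b \<in> B)} * card {P. ncp b N P}"
proof -
  have "card {P. ncp 1 N P \<and> (\<exists>B\<in>P. 1 \<in> B \<and> Max B = b)}
       = card ({P. ncp 1 b P \<and> (\<exists>B\<in>P. 1 \<in> B \<and> b \<in> B)} \<times> {P. ncp b N P})"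
  proof (rule bij_betw_same_card[of "\<lambda>P. (lpart b P, rpart b N P)"], rule bij_betw_byWitness[where f'="glue b"])
    show "\<forall>a\<in>{P. ncp 1 N P \<and> (\<exists>B\<in>P. 1 \<in> B \<and> Max B = b)}. glue b (lpart b a, rpart b N a) = a"
    proof
      fix P assume "P \<in> {P. ncp 1 N P \<and> (\<exists>B\<in>P. 1 \<in> B \<and> Max B = b)}"
      then obtain B where "ncp 1 N P" "B \<in> P" "1 \<in> B" "Max B = b" by blast
      then show "glue b (lpart b P, rpart b N P) = P" using rt1[of N P B b] b2 by simp
    qed
    show "\<forall>a'\<in>{P. ncp 1 b P \<and> (\<exists>B\<in>P. 1 \<in> B \<and> b \<in> B)} \<times> {P. ncp b N P}.
            (lpart b (glue b a'), rpart b N (glue b a')) = a'"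
    proof clarify
      fix P Q B assume "ncp 1 b P" "B \<in> P" "1 \<in> B" "b \<in> B" "ncp b N Q"
      then show "lpart b (glue b (P, Q)) = P \<and> rpart b N (glue b (P, Q)) = Q"
        using rt2[of b P B N Q] b2 bN by simp
    qed
    show "(\<lambda>P. (lpart b P, rpart b N P)) ` {P. ncp 1 N P \<and> (\<exists>B\<in>P. 1 \<in> B \<and> Max B = b)}
          \<subseteq> {P. ncp 1 b P \<and> (\<exists>B\<in>P. 1 \<in> B \<and> b \<in> B)} \<times> {P. ncp b N P}"
    proof
      fix X assume "X \<in> (\<lambda>P. (lpart b P, rpart b N P)) ` {P. ncp 1 N P \<and> (\<exists>B\<in>P. 1 \<in> B \<and> Max B = b)}"
      then obtain P B where "X = (lpart b P, rpart b N P)" "ncp 1 N P" "B \<in> P" "1 \<in> B" "Max B = b" by blast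
      then show "X \<in> {P. ncp 1 b P \<and> (\<exists>B\<in>P. 1 \<in> B \<and> b \<in> B)} \<times> {P. ncp b N P}"
        using lpart_ok[of N P B b] rpart_ok[of N P B b] bN by simp
    qed
    show "glue b ` ({P. ncp 1 b P \<and> (\<exists>B\<in>P. 1 \<in> B \<and> b \<in> B)} \<times> {P. ncp b N P})
          \<subseteq> {P. ncp 1 N P \<and> (\<exists>B\<in>P. 1 \<in> B \<and> Max B = b)}"
    proof clarify
      fix P Q B assume "ncp 1 b P" "B \<in> P" "1 \<in> B" "b \<in> B" "ncp b N Q"
      then show "ncp 1 N (glue b (P, Q)) \<and> (\<exists>B\<in>glue b (P, Q). 1 \<in> B \<and> Max B = b)"
        using glue_ok[of b P B N Q] b2 bN by simp
    qed
  qed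
  then show ?thesis by (simp add: card_cartesian_product)
qed

lemma cross_ins_max1: assumes "crossing (insert m A) D" "\<forall>x\<in>D. x < m" shows "crossing A D"
proof -
  obtain a c b' d where h: "a \<in> insert m A" "c \<in> insert m A" "b' \<in> D" "d \<in> D" "a < b'" "b' < c" "c < d"
    using assms(1) unfolding crossing_def by blast
  have "d < m" using assms(2) h(4) by blast
  then have "a \<noteq> m" "c \<noteq> m" using h by auto
  then have "a \<in> A" "c \<in> A" using h by auto
  then show ?thesis unfolding crossing_def using h by blast
qed

lemma cross_ins_max2: assumes "crossing D (insert m A)" "\<forall>x\<in>D. x < m" "1 \<in> A" "\<forall>x\<in>D. (1::int) < x"
  shows "crossing A D \<or> crossing D A"
proof -
  obtain a c b' d where h: "a \<in> D" "c \<in> D" "b' \<in> insert m A" "d \<in> insert m A" "a < b'" "b' < c" "c < d"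
    using assms(1) unfolding crossing_def by blast
  have "c < m" using assms(2) h(2) by blast
  then have "b' \<in> A" using h by auto
  show ?thesis
  proof (cases "d \<in> A")
    case True
    then have "crossing D A" unfolding crossing_def using h \<open>b' \<in> A\<close> by blast
    then show ?thesis by blast
  next
    case False
    have "1 < a" using assms(4) h(1) by blast
    then have "crossing A D" unfolding crossing_def using h \<open>b' \<in> A\<close> assms(3) by blast
    then show ?thesis by blast
  qed
qed

definition hins :: "int \<Rightarrow> int set \<Rightarrow> int set" where
  "hins b B = (if 1 \<in> B then insert b B else B)"

lemma G_f_ok: assumes L: "ncp 1 b P" "B1 \<in> P" "1 \<in> B1" "b \<in> B1" "2 \<le> b"
  shows "ncp 1 (b - 1) ((\<lambda>B. B - {b}) ` P)"
proof -
  have same: "B - {b} = B" if "B \<in> P" "B \<noteq> B1" for B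
    using L_b_unique[OF L that(1)] that by blast
  have m1: "Min (B1 - {b}) = 1"
    using Min_eq_lo[of "B1 - {b}" 1 b] ncp_block_finite[OF L(1,2)] ncp_sub[OF L(1,2)] L(3) L(5) by auto
  have m1': "Min B1 = 1" using Min_eq_lo[OF ncp_block_finite[OF L(1,2)] ncp_sub[OF L(1,2)] L(3)] .
  have n1: "1 \<notin> D" if "D \<in> P" "D \<noteq> B1" for D using ncp_lo_unique[OF L(1) L(2) that(1) L(3)] that by blast
  have mix: "nearly_disjoint (B1 - {b}) D \<and> nearly_disjoint D (B1 - {b}) \<and> \<not> crossing (B1 - {b}) D \<and> \<not> crossing D (B1 - {b})"
    if "D \<in> P" "D \<noteq> B1" for D
  proof -
    have p1: "nearly_disjoint B1 D \<and> \<not> crossing B1 D" using ncp_pair[OF L(1) L(2) that(1)] that(2) by auto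
    have p2: "nearly_disjoint D B1 \<and> \<not> crossing D B1" using ncp_pair[OF L(1) that(1) L(2)] that(2) by auto
    have "nearly_disjoint (B1 - {b}) D" using nd_mod[of B1 D "B1 - {b}"] p1 m1 m1' n1[OF that] by auto
    moreover have "\<not> crossing (B1 - {b}) D" "\<not> crossing D (B1 - {b})"
      using crossing_mono[of "B1 - {b}" D B1 D] crossing_mono[of D "B1 - {b}" D B1] p1 p2 by auto
    ultimately show ?thesis using nd_sym by blast
  qed
  show ?thesis
  proof (rule ncp_intro)
    show "B \<noteq> {}" if hB: "B \<in> (\<lambda>B. B - {b}) ` P" for B
    proof -
      obtain X where X: "X \<in> P" "B = X - {b}" using hB by blast
      show ?thesis
      proof (cases "X = B1")
        case True then show ?thesis using X L(3) L(5) by auto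
      next
        case False then show ?thesis using X same ncp_ne[OF L(1)] by auto
      qed
    qed
    show "B \<subseteq> {1..b - 1}" if hB: "B \<in> (\<lambda>B. B - {b}) ` P" for B
    proof -
      obtain X where X: "X \<in> P" "B = X - {b}" using hB by blast
      have "X \<subseteq> {1..b}" using ncp_sub[OF L(1) X(1)] .
      then show ?thesis using X(2) by auto
    qed
    have "\<Union>((\<lambda>B. B - {b}) ` P) = \<Union>P - {b}" by auto
    also have "\<dots> = {1..b - 1}" using ncp_Un[OF L(1)] by auto
    finally show "\<Union>((\<lambda>B. B - {b}) ` P) = {1..b - 1}" .
    have pair: "nearly_disjoint B D \<and> \<not> crossing B D" if hB: "B \<in> (\<lambda>B. B - {b}) ` P" "D \<in> (\<lambda>B. B - {b}) ` P" "B \<noteq> D" for B D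
    proof -
      obtain X Y where XY: "X \<in> P" "B = X - {b}" "Y \<in> P" "D = Y - {b}" using hB(1,2) by blast
      then have "X \<noteq> Y" using hB(3) by blast
      show ?thesis
      proof (cases "X = B1")
        case True
        then show ?thesis using mix[of Y] XY \<open>X \<noteq> Y\<close> same[of Y] by auto
      next
        case False
        note XF = False
        show ?thesis
        proof (cases "Y = B1")
          case True
          then show ?thesis using mix[of X] XY \<open>X \<noteq> Y\<close> same[of X] by auto
        next
          case False
          then show ?thesis using XY same[of X] same[of Y] XF \<open>X \<noteq> Y\<close> ncp_pair[OF L(1) XY(1) XY(3)] by auto
        qed
      qed
    qed
    show "nearly_disjoint B D" if "B \<in> (\<lambda>B. B - {b}) ` P" "D \<in> (\<lambda>B. B - {b}) ` P" "B \<noteq> D" for B D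
      using pair[OF that] by blast
    show "\<not> crossing B D" if "B \<in> (\<lambda>B. B - {b}) ` P" "D \<in> (\<lambda>B. B - {b}) ` P" "B \<noteq> D" for B D
      using pair[OF that] by blast
  qed
qed

lemma G_g_ok: assumes Q: "ncp 1 (b - 1) Q" and b2: "2 \<le> b"
  shows "ncp 1 b (hins b ` Q) \<and> (\<exists>B\<in>hins b ` Q. 1 \<in> B \<and> b \<in> B)"
proof -
  obtain B0 where B0: "B0 \<in> Q" "1 \<in> B0" using ncp_lo_exists[OF Q] b2 by auto
  have bnot: "b \<notin> B" if "B \<in> Q" for B using ncp_sub[OF Q that] by auto
  have lt: "\<forall>x\<in>B. x < b" if "B \<in> Q" for B using ncp_sub[OF Q that] by auto
  have hB0: "hins b B0 = insert b B0" using B0 unfolding hins_def by simp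
  have hD: "hins b D = D" if "D \<in> Q" "D \<noteq> B0" for D
    using ncp_lo_unique[OF Q B0(1) that(1) B0(2)] that unfolding hins_def by auto
  have n1: "1 \<notin> D" if "D \<in> Q" "D \<noteq> B0" for D using ncp_lo_unique[OF Q B0(1) that(1) B0(2)] that by blast
  have gt1: "\<forall>x\<in>D. 1 < x" if "D \<in> Q" "D \<noteq> B0" for D
  proof
    fix x assume "x \<in> D"
    then have "1 \<le> x" "x \<noteq> 1" using ncp_sub[OF Q that(1)] n1[OF that] by auto
    then show "1 < x" by simp
  qed
  have subb: "insert b B0 \<subseteq> {1..b}" using ncp_sub[OF Q B0(1)] b2 by auto
  have m1: "Min (insert b B0) = 1" using Min_eq_lo[OF _ subb] B0(2) ncp_block_finite[OF Q B0(1)] by auto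
  have m1': "Min B0 = 1" using Min_eq_lo[OF ncp_block_finite[OF Q B0(1)] ncp_sub[OF Q B0(1)] B0(2)] .
  have mix: "nearly_disjoint (insert b B0) D \<and> nearly_disjoint D (insert b B0) \<and> \<not> crossing (insert b B0) D \<and> \<not> crossing D (insert b B0)"
    if "D \<in> Q" "D \<noteq> B0" for D
  proof -
    have p1: "nearly_disjoint B0 D \<and> \<not> crossing B0 D" using ncp_pair[OF Q B0(1) that(1)] that(2) by auto
    have p2: "\<not> crossing D B0" using ncp_pair[OF Q that(1) B0(1)] that(2) by auto
    have "nearly_disjoint (insert b B0) D" using nd_mod[of B0 D "insert b B0"] p1 m1 m1' n1[OF that] bnot[OF that(1)] by auto
    moreover have "\<not> crossing (insert b B0) D" using cross_ins_max1[of b B0 D] lt[OF that(1)] p1 by auto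
    moreover have "\<not> crossing D (insert b B0)" using cross_ins_max2[of D b B0] lt[OF that(1)] p1 p2 B0(2) gt1[OF that] by auto
    ultimately show ?thesis using nd_sym by blast
  qed
  have pair: "nearly_disjoint B D \<and> \<not> crossing B D" if hB: "B \<in> hins b ` Q" "D \<in> hins b ` Q" "B \<noteq> D" for B D
  proof -
    obtain X Y where XY: "X \<in> Q" "B = hins b X" "Y \<in> Q" "D = hins b Y" using hB(1,2) by blast
    then have "X \<noteq> Y" using hB(3) by blast
    show ?thesis
    proof (cases "X = B0")
      case True
      then show ?thesis using mix[of Y] XY \<open>X \<noteq> Y\<close> hD[of Y] hB0 by auto
    next
      case False
      note XF = False
      show ?thesis
      proof (cases "Y = B0")
        case True
        then show ?thesis using mix[of X] XY \<open>X \<noteq> Y\<close> hD[of X] hB0 by auto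
      next
        case False
        then show ?thesis using XY hD[of X] hD[of Y] XF \<open>X \<noteq> Y\<close> ncp_pair[OF Q XY(1) XY(3)] by auto
      qed
    qed
  qed
  have "ncp 1 b (hins b ` Q)"
  proof (rule ncp_intro)
    show "B \<noteq> {}" if hB: "B \<in> hins b ` Q" for B
      using hB ncp_ne[OF Q] unfolding hins_def by auto
    show "B \<subseteq> {1..b}" if hB: "B \<in> hins b ` Q" for B
    proof -
      obtain X where X: "X \<in> Q" "B = hins b X" using hB by blast
      have "X \<subseteq> {1..b}" using ncp_sub[OF Q X(1)] by auto
      then show ?thesis using X(2) b2 unfolding hins_def by auto
    qed
    have "\<Union>(hins b ` Q) = \<Union>Q \<union> {b}"
    proof
      show "\<Union>(hins b ` Q) \<subseteq> \<Union>Q \<union> {b}" unfolding hins_def by auto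
      show "\<Union>Q \<union> {b} \<subseteq> \<Union>(hins b ` Q)"
      proof -
        have "b \<in> hins b B0" using hB0 by simp
        moreover have "X \<subseteq> hins b X" for X unfolding hins_def by auto
        ultimately show ?thesis using B0(1) by blast
      qed
    qed
    also have "\<dots> = {1..b}" using ncp_Un[OF Q] b2 by auto
    finally show "\<Union>(hins b ` Q) = {1..b}" .
    show "nearly_disjoint B D" if "B \<in> hins b ` Q" "D \<in> hins b ` Q" "B \<noteq> D" for B D
      using pair[OF that] by blast
    show "\<not> crossing B D" if "B \<in> hins b ` Q" "D \<in> hins b ` Q" "B \<noteq> D" for B D
      using pair[OF that] by blast
  qed
  moreover have "hins b B0 \<in> hins b ` Q" "1 \<in> hins b B0" "b \<in> hins b B0" using B0 hB0 by auto
  ultimately show ?thesis by blast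
qed

lemma G: assumes b2: "2 \<le> b"
  shows "card {P. ncp 1 b P \<and> (\<exists>B\<in>P. 1 \<in> B \<and> b \<in> B)} = card {P. ncp 1 (b - 1) P}"
proof (rule bij_betw_same_card[of "(`) (\<lambda>B. B - {b})"], rule bij_betw_byWitness[where f'="(`) (hins b)"])
  show "\<forall>a\<in>{P. ncp 1 b P \<and> (\<exists>B\<in>P. 1 \<in> B \<and> b \<in> B)}. hins b ` (\<lambda>B. B - {b}) ` a = a"
  proof
    fix P assume "P \<in> {P. ncp 1 b P \<and> (\<exists>B\<in>P. 1 \<in> B \<and> b \<in> B)}"
    then obtain B1 where L: "ncp 1 b P" "B1 \<in> P" "1 \<in> B1" "b \<in> B1" by blast
    have "hins b (B - {b}) = B" if "B \<in> P" for B
    proof (cases "1 \<in> B")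
      case True
      then have "B = B1" using ncp_lo_unique[OF L(1) that L(2) _ L(3)] by blast
      then show ?thesis using L(3,4) b2 unfolding hins_def by auto
    next
      case False
      then have "b \<notin> B" using L_b_unique[OF L b2 that] L(3) by blast
      then show ?thesis using False unfolding hins_def by auto
    qed
    then show "hins b ` (\<lambda>B. B - {b}) ` P = P" by (simp add: image_image)
  qed
  show "\<forall>a'\<in>{P. ncp 1 (b - 1) P}. (\<lambda>B. B - {b}) ` hins b ` a' = a'"
  proof
    fix Q assume "Q \<in> {P. ncp 1 (b - 1) P}"
    then have Q: "ncp 1 (b - 1) Q" by simp
    have "hins b B - {b} = B" if "B \<in> Q" for B
      using ncp_sub[OF Q that] unfolding hins_def by auto
    then show "(\<lambda>B. B - {b}) ` hins b ` Q = Q" by (simp add: image_image)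
  qed
  show "(`) (\<lambda>B. B - {b}) ` {P. ncp 1 b P \<and> (\<exists>B\<in>P. 1 \<in> B \<and> b \<in> B)} \<subseteq> {P. ncp 1 (b - 1) P}"
  proof
    fix X assume "X \<in> (`) (\<lambda>B. B - {b}) ` {P. ncp 1 b P \<and> (\<exists>B\<in>P. 1 \<in> B \<and> b \<in> B)}"
    then obtain P B1 where "X = (\<lambda>B. B - {b}) ` P" "ncp 1 b P" "B1 \<in> P" "1 \<in> B1" "b \<in> B1" by blast
    then show "X \<in> {P. ncp 1 (b - 1) P}" using G_f_ok[of b P B1] b2 by simp
  qed
  show "(`) (hins b) ` {P. ncp 1 (b - 1) P} \<subseteq> {P. ncp 1 b P \<and> (\<exists>B\<in>P. 1 \<in> B \<and> b \<in> B)}"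
    using G_g_ok b2 by blast
qed

lemma f1: "ncl_count 1 = 1"
proof -
  have "{P. ncp 1 1 P} = {{{1}}}"
  proof (intro set_eqI iffI)
    fix P assume "P \<in> {P. ncp 1 1 P}"
    then have P: "ncp 1 1 P" by simp
    have "B = {1}" if "B \<in> P" for B using ncp_sub[OF P that] ncp_ne[OF P that] by auto
    moreover have "P \<noteq> {}" using ncp_Un[OF P] by auto
    ultimately show "P \<in> {{{1}}}" by blast
  next
    fix P assume "P \<in> {{{1::int}}}"
    then have "P = {{1}}" by simp
    moreover have "ncp 1 1 {{1::int}}" by (rule ncp_intro) auto
    ultimately show "P \<in> {P. ncp 1 1 P}" by simp
  qed
  then show ?thesis by (simp add: ncl_count_ncp)
qed

lemma rec: assumes n: "n \<ge> 1"
  shows "ncl_count (n + 1) = ncl_count n + (\<Sum>k=1..n. ncl_count k * ncl_count (n + 1 - k))"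
proof -
  define N where "N = int n + 1"
  define T where "T = (\<lambda>b. {P. ncp 1 N P \<and> (\<exists>B\<in>P. 1 \<in> B \<and> Max B = b)})"
  have c0: "ncl_count (n + 1) = card {P. ncp 1 N P}" unfolding N_def by (simp add: ncl_count_ncp add.commute)
  have S: "{P. ncp 1 N P} = (\<Union>k\<in>{0..n}. T (int k + 1))"
  proof (intro set_eqI iffI)
    fix P assume "P \<in> {P. ncp 1 N P}"
    then have P: "ncp 1 N P" by simp
    obtain B1 where B1: "B1 \<in> P" "1 \<in> B1" using ncp_lo_exists[OF P] N_def by auto
    have f: "finite B1" using ncp_block_finite[OF P B1(1)] .
    have "Max B1 \<in> {1..N}" using Max_in[OF f] B1 ncp_sub[OF P B1(1)] by blast
    then have "Max B1 = int (nat (Max B1 - 1)) + 1" "nat (Max B1 - 1) \<in> {0..n}" unfolding N_def by auto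
    then show "P \<in> (\<Union>k\<in>{0..n}. T (int k + 1))" unfolding T_def using P B1 by blast
  qed (auto simp: T_def)
  have fin: "finite (T b)" for b
    by (rule finite_subset[OF _ ncp_finite[of 1 N]]) (auto simp: T_def)
  have disj: "T (int i + 1) \<inter> T (int j + 1) = {}" if "i \<noteq> j" for i j
  proof (rule ccontr)
    assume "T (int i + 1) \<inter> T (int j + 1) \<noteq> {}"
    then obtain P B B' where "ncp 1 N P" "B \<in> P" "1 \<in> B" "Max B = int i + 1" "B' \<in> P" "1 \<in> B'" "Max B' = int j + 1"
      unfolding T_def by blast
    then show False using ncp_lo_unique that by fastforce
  qed
  have "card {P. ncp 1 N P} = (\<Sum>k\<in>{0..n}. card (T (int k + 1)))"
    unfolding S by (rule card_UN_disjoint) (use fin disj in auto)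
  also have "\<dots> = card (T 1) + (\<Sum>k\<in>{1..n}. card (T (int k + 1)))"
  proof -
    have "{0..n} = insert 0 {1..n}" by auto
    then show ?thesis by simp
  qed
  also have "card (T 1) = ncl_count n"
  proof -
    have "card (T 1) = card {P. ncp 2 N P}" unfolding T_def using T1[of N] N_def by simp
    also have "\<dots> = ncl_count (nat (N - 2 + 1))" by (rule ncp_count) (simp add: N_def)
    also have "nat (N - 2 + 1) = n" unfolding N_def by simp
    finally show ?thesis .
  qed
  also have "(\<Sum>k\<in>{1..n}. card (T (int k + 1))) = (\<Sum>k=1..n. ncl_count k * ncl_count (n + 1 - k))"
  proof (rule sum.cong)
    fix k assume k: "k \<in> {1..n}"
    have "card (T (int k + 1)) = card {P. ncp 1 (int k + 1) P \<and> (\<exists>B\<in>P. 1 \<in> B \<and> int k + 1 \<in> B)} * card {P. ncp (int k + 1) N P}"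
      unfolding T_def using Tb[of "int k + 1" N] k N_def by simp
    also have "card {P. ncp 1 (int k + 1) P \<and> (\<exists>B\<in>P. 1 \<in> B \<and> int k + 1 \<in> B)} = card {P. ncp 1 (int k + 1 - 1) P}"
      using G[of "int k + 1"] k by simp
    also have "\<dots> = ncl_count k" using ncp_count[of 1 "int k + 1 - 1"] by simp
    also have "card {P. ncp (int k + 1) N P} = ncl_count (nat (N - (int k + 1) + 1))"
      by (rule ncp_count) (use k N_def in simp)
    also have "nat (N - (int k + 1) + 1) = n + 1 - k" using k unfolding N_def by auto
    finally show "card (T (int k + 1)) = ncl_count k * ncl_count (n + 1 - k)" .
  qed simp
  finally show ?thesis using c0 by simp
qed

theorem proposition2p2:
  shows "ncl_count 1 = 1 \<and>
         (\<forall>n\<ge>1. ncl_count (n + 1) = ncl_count n + (\<Sum>k=1..n. ncl_count k * ncl_count (n + 1 - k)))"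
  using f1 rec by blast

end
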